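(* Let $\{X_n;\,n\ge1\}$ be independent copies of a $\mathbf B$-valued random variable $X$ with $\mathbb E\|X\|<\infty$. Define $S_n^{(1)}=\sum_{k=1}^nX_kI\{\|X_k\|\le k\}$ and $U_n=\sum_{k=1}^nX_kI\{\|X_k\|\le n\}$, $n\ge1$. Then (i) $\sum_{n=1}^\infty\frac1n\left(\frac{\|\mathbb ES_n^{(1)}\|}{n}\right)<\infty$ if and only if $\sum_{n=1}^\infty\frac{\|\mathbb EXI\{\|X\|\le n\}\|}{n}<\infty$; (ii) $\sum_{n=1}^\infty\frac1n\left(\frac{\mathbb E\|S_n^{(1)}-\mathbb ES_n^{(1)}\|}{n}\right)<\infty$ if and only if $\sum_{n=1}^\infty\frac1n\left(\frac{\mathbb E\|U_n-\mathbb EU_n\|}{n}\right)<\infty$.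
   Context: $(\mathbf{B},\|\cdot\|)$ is a real separable Banach space with its Borel $\sigma$-algebra. $\mathbb{E}$ of a $\mathbf B$-valued random variable denotes the Pettis integral. $I\{\cdot\}$ denotes an indicator. *)

theory Defs
  imports "HOL-Probability.Probability"
begin

text \<open>Truncated partial sums. The sequence Xs is indexed from 1 (Xs 0 is unused).
  S1 Xs n = sum over k=1..n of X_k I{norm X_k <= k};
  Utr Xs n = sum over k=1..n of X_k I{norm X_k <= n}.\<close>

definition S1 :: "(nat \<Rightarrow> 'a \<Rightarrow> 'b::real_normed_vector) \<Rightarrow> nat \<Rightarrow> 'a \<Rightarrow> 'b" where
  "S1 Xs n \<omega> = (\<Sum>k\<in>{1..n}. if norm (Xs k \<omega>) \<le> real k then Xs k \<omega> else 0)"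

definition Utr :: "(nat \<Rightarrow> 'a \<Rightarrow> 'b::real_normed_vector) \<Rightarrow> nat \<Rightarrow> 'a \<Rightarrow> 'b" where
  "Utr Xs n \<omega> = (\<Sum>k\<in>{1..n}. if norm (Xs k \<omega>) \<le> real n then Xs k \<omega> else 0)"

end

theory Submission
  imports Defs
begin

definition phi :: "nat \<Rightarrow> nat \<Rightarrow> real \<Rightarrow> real" where
  "phi k m t = (if real k < t \<and> t \<le> real m then t else 0)"

definition Phi :: "nat \<Rightarrow> real \<Rightarrow> real" where
  "Phi m t = (\<Sum>k\<in>{1..m}. phi k m t)"

lemma count_bound:
  fixes t :: real assumes "t \<ge> 0"
  shows "(\<Sum>k\<in>{1..m}. if real k < t then 1 else 0::real) \<le> t \<and>
         (\<Sum>k\<in>{1..m}. if real k < t then 1 else 0::real) \<le> real m"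
proof (induction m)
  case 0 thus ?case using assms by simp
next
  case (Suc m)
  thus ?case by (auto simp: sum.cl_ivl_Suc)
qed

lemma Phi_nonneg: "t \<ge> 0 \<Longrightarrow> 0 \<le> Phi m t"
  unfolding Phi_def phi_def by (intro sum_nonneg) auto

lemma Phi_le:
  fixes t :: real assumes "t \<ge> 0"
  shows "Phi m t \<le> t * t * (if t \<le> real m then 1 else 0)"
proof (cases "t \<le> real m")
  case True
  have "Phi m t = t * (\<Sum>k\<in>{1..m}. if real k < t then 1 else 0::real)"
    unfolding Phi_def phi_def sum_distrib_left using True by (intro sum.cong) auto
  also have "\<dots> \<le> t * t" using count_bound[OF assms, of m] assms
    by (intro mult_left_mono) auto
  finally show ?thesis using True by simp
next
  case False
  thus ?thesis unfolding Phi_def phi_def by simp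
qed

lemma Phi_le2: "t \<ge> 0 \<Longrightarrow> Phi m t \<le> real m * real m"
proof -
  assume t: "t \<ge> 0"
  have "t * t * (if t \<le> real m then 1 else 0) \<le> real m * real m"
    using t by (auto intro: mult_mono)
  thus ?thesis using Phi_le[OF t, of m] by linarith
qed

lemma sum_sq_bound:
  fixes t :: real assumes "t > 0"
  shows "(\<Sum>n<N. (if t \<le> real (Suc n) then 1 / (real (Suc n))^2 else 0))
     \<le> (if t \<le> real N then 2/t - 1/real N else 0)"
proof (induction N)
  case 0 thus ?case using assms by simp
next
  case (Suc N)
  show ?case
  proof (cases "t \<le> real N")
    case True
    hence N: "N \<ge> 1" using assms by (cases N) auto
    have e1: "1 / real N - 1 / real (Suc N) = 1 / (real N * real (Suc N))"
      using N by (simp add: field_simps)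
    have e2: "1 / (real (Suc N))^2 \<le> 1 / (real N * real (Suc N))"
      using N by (intro divide_left_mono) (auto simp: power2_eq_square intro!: mult_right_mono)
    have "1 / (real (Suc N))^2 + 1 / real (Suc N) \<le> 1 / real N"
      using e1 e2 by linarith
    thus ?thesis using Suc True by simp
  next
    case False
    show ?thesis
    proof (cases "t \<le> real (Suc N)")
      case True
      have "2 / t \<ge> 2 / real (Suc N)" using True assms by (intro divide_left_mono) auto
      moreover have "1 / (real (Suc N))^2 \<le> 1 / real (Suc N)"
        by (intro divide_left_mono) (auto simp: power2_eq_square)
      ultimately show ?thesis using Suc False True by simp
    next
      case F2: False
      thus ?thesis using Suc False by simp
    qed
  qed
qed

lemma sum_sq_bound2:
  fixes t :: real assumes "t > 0"
  shows "(\<Sum>n<N. (if t \<le> real (Suc n) then 1 / (real (Suc n))^2 else 0)) \<le> 2 / t"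
proof -
  have nn: "1 / real N \<ge> 0" by simp
  have p: "2 / t > 0" using assms by simp
  show ?thesis
  proof (cases "t \<le> real N")
    case True
    hence "(\<Sum>n<N. (if t \<le> real (Suc n) then 1 / (real (Suc n))^2 else 0)) \<le> 2/t - 1/real N"
      using sum_sq_bound[OF assms, of N] by (simp del: of_nat_Suc)
    thus ?thesis using nn by linarith
  next
    case False thus ?thesis using sum_sq_bound[OF assms, of N] p by (simp del: of_nat_Suc)
  qed
qed

lemma G_bound:
  fixes t :: real assumes "t \<ge> 0"
  shows "(\<Sum>n<N. Phi (Suc n) t / (real (Suc n))^2) \<le> 2 * t"
proof (cases "t = 0")
  case True thus ?thesis unfolding Phi_def phi_def by simp
next
  case False
  hence tp: "t > 0" using assms by simp
  have "(\<Sum>n<N. Phi (Suc n) t / (real (Suc n))^2)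
      \<le> (\<Sum>n<N. t * t * (if t \<le> real (Suc n) then 1 / (real (Suc n))^2 else 0))"
  proof (intro sum_mono)
    fix n assume "n \<in> {..<N}"
    have "Phi (Suc n) t / (real (Suc n))^2 \<le> t * t * (if t \<le> real (Suc n) then 1 else 0) / (real (Suc n))^2"
      using Phi_le[OF assms, of "Suc n"] by (intro divide_right_mono) (simp_all del: of_nat_Suc)
    thus "Phi (Suc n) t / (real (Suc n))^2 \<le> t * t * (if t \<le> real (Suc n) then 1 / (real (Suc n))^2 else 0)"
      by (simp split: if_splits)
  qed
  also have "\<dots> = t * t * (\<Sum>n<N. (if t \<le> real (Suc n) then 1 / (real (Suc n))^2 else 0))"
    by (simp add: sum_distrib_left)
  also have "\<dots> \<le> t * t * (2 / t)"
    using sum_sq_bound2[OF tp, of N] by (intro mult_left_mono) auto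
  also have "\<dots> = 2 * t" using tp by simp
  finally show ?thesis .
qed

lemma summable_iff_close:
  fixes f g h :: "nat \<Rightarrow> real"
  assumes "\<And>n. 0 \<le> f n" "\<And>n. 0 \<le> g n" "\<And>n. \<bar>f n - g n\<bar> \<le> h n" "summable h"
  shows "summable f \<longleftrightarrow> summable g"
proof
  assume "summable f"
  hence s: "summable (\<lambda>n. f n + h n)" using assms(4) by (rule summable_add)
  show "summable g"
  proof (rule summable_comparison_test'[OF s, of 0])
    fix n have "\<bar>f n - g n\<bar> \<le> h n" by (rule assms(3))
    thus "norm (g n) \<le> f n + h n" using assms(1,2)[of n] by (simp add: abs_le_iff)
  qed
next
  assume "summable g"
  hence s: "summable (\<lambda>n. g n + h n)" using assms(4) by (rule summable_add)
  show "summable f"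
  proof (rule summable_comparison_test'[OF s, of 0])
    fix n have "\<bar>f n - g n\<bar> \<le> h n" by (rule assms(3))
    thus "norm (f n) \<le> g n + h n" using assms(1,2)[of n] by (simp add: abs_le_iff)
  qed
qed

lemma transfer_int:
  fixes f :: "'b::{banach, second_countable_topology} \<Rightarrow> 'c::{banach, second_countable_topology}"
  assumes "Y \<in> borel_measurable M" "X \<in> borel_measurable M" "distr M borel Y = distr M borel X"
   "f \<in> borel_measurable borel"
  shows "integral\<^sup>L M (\<lambda>\<omega>. f (Y \<omega>)) = integral\<^sup>L M (\<lambda>\<omega>. f (X \<omega>))"
  by (metis assms integral_distr)

lemma diff_tr:
  fixes x :: "'b::real_normed_vector"
  assumes "k \<le> m"
  shows "norm ((if norm x \<le> real k then x else 0) - (if norm x \<le> real m then x else 0)) \<le> phi k m (norm x)"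
  using assms by (auto simp: phi_def)

theorem lemma5p2:
  fixes M :: "'a measure"
    and X :: "'a \<Rightarrow> 'b::{banach, second_countable_topology}"
    and Xs :: "nat \<Rightarrow> 'a \<Rightarrow> 'b"
  assumes "prob_space M"
    and "X \<in> borel_measurable M"
    and "integrable M (\<lambda>\<omega>. norm (X \<omega>))"
    and "prob_space.indep_vars M (\<lambda>_. borel) Xs {1..}"
    and "\<And>n. n \<ge> 1 \<Longrightarrow> distr M borel (Xs n) = distr M borel X"
  shows "(summable (\<lambda>n. (1 / real (Suc n)) * (norm (integral\<^sup>L M (S1 Xs (Suc n))) / real (Suc n)))
           \<longleftrightarrow> summable (\<lambda>n. norm (integral\<^sup>L M (\<lambda>\<omega>. if norm (X \<omega>) \<le> real (Suc n) then X \<omega> else 0))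
                                / real (Suc n)))
       \<and> (summable (\<lambda>n. (1 / real (Suc n)) *
              ((integral\<^sup>L M (\<lambda>\<omega>. norm (S1 Xs (Suc n) \<omega> - integral\<^sup>L M (S1 Xs (Suc n))))) / real (Suc n)))
           \<longleftrightarrow> summable (\<lambda>n. (1 / real (Suc n)) *
              ((integral\<^sup>L M (\<lambda>\<omega>. norm (Utr Xs (Suc n) \<omega> - integral\<^sup>L M (Utr Xs (Suc n))))) / real (Suc n))))"
proof -
  interpret P: prob_space M by fact
  note Xm = assms(2)
  have Xsm: "\<And>k. k \<ge> 1 \<Longrightarrow> Xs k \<in> borel_measurable M"
    using assms(4) unfolding P.indep_vars_def by auto
  define a where "a = (\<lambda>m::nat. integral\<^sup>L M (\<lambda>\<omega>. if norm (X \<omega>) \<le> real m then X \<omega> else 0))"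
  define c where "c = (\<lambda>m. integral\<^sup>L M (\<lambda>\<omega>. Phi m (norm (X \<omega>))))"
  have mphi: "\<And>k m. (\<lambda>x::'b. phi k m (norm x)) \<in> borel_measurable borel"
    unfolding phi_def by measurable
  have mPhi: "\<And>m. (\<lambda>x::'b. Phi m (norm x)) \<in> borel_measurable borel"
    unfolding Phi_def using mphi by (intro borel_measurable_sum) auto
  have mtr: "\<And>r. (\<lambda>x::'b. if norm x \<le> r then x else 0) \<in> borel_measurable borel"
    by measurable
  have int_tr: "integrable M (\<lambda>\<omega>. if norm (Y \<omega>) \<le> r then Y \<omega> else 0)"
    if "Y \<in> borel_measurable M" for Y :: "'a \<Rightarrow> 'b" and r :: real
    by (rule P.integrable_const_bound[where B="max r 0"])
       (auto intro!: AE_I2 measurable_compose[OF that mtr])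
  have int_phi: "integrable M (\<lambda>\<omega>. phi k m (norm (Y \<omega>)))"
    if "Y \<in> borel_measurable M" for Y :: "'a \<Rightarrow> 'b" and k m
  proof (rule P.integrable_const_bound[where B="real m"])
    show "(\<lambda>\<omega>. phi k m (norm (Y \<omega>))) \<in> borel_measurable M" by (rule measurable_compose[OF that mphi])
  qed (auto intro!: AE_I2 simp: phi_def)
  have intPhi: "integrable M (\<lambda>\<omega>. Phi m (norm (X \<omega>)))" for m
    by (rule P.integrable_const_bound[where B="real m * real m"])
       (auto intro!: AE_I2 measurable_compose[OF Xm mPhi] simp: Phi_nonneg Phi_le2)
  have transfer: "integral\<^sup>L M (\<lambda>\<omega>. f (Xs k \<omega>)) = integral\<^sup>L M (\<lambda>\<omega>. f (X \<omega>))"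
    if "k \<ge> 1" "f \<in> borel_measurable borel" for k and f :: "'b \<Rightarrow> 'c::{banach, second_countable_topology}"
    by (rule transfer_int[OF Xsm[OF that(1)] Xm assms(5)[OF that(1)] that(2)])

  have csum: "summable (\<lambda>n. c (Suc n) / (real (Suc n))^2)"
  proof (rule summableI_nonneg_bounded[where x="2 * integral\<^sup>L M (\<lambda>\<omega>. norm (X \<omega>))"])
    fix n show "0 \<le> c (Suc n) / (real (Suc n))^2" unfolding c_def
      by (intro divide_nonneg_nonneg integral_nonneg_AE) (auto simp: Phi_nonneg)
  next
    fix N
    have "(\<Sum>n<N. c (Suc n) / (real (Suc n))^2)
        = (\<Sum>n<N. integral\<^sup>L M (\<lambda>\<omega>. Phi (Suc n) (norm (X \<omega>)) / (real (Suc n))^2))"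
      unfolding c_def by simp
    also have "\<dots> = integral\<^sup>L M (\<lambda>\<omega>. \<Sum>n<N. Phi (Suc n) (norm (X \<omega>)) / (real (Suc n))^2)"
      by (rule Bochner_Integration.integral_sum[symmetric])
         (auto intro: intPhi)
    also have "\<dots> \<le> integral\<^sup>L M (\<lambda>\<omega>. 2 * norm (X \<omega>))"
      by (rule integral_mono) (auto intro!: intPhi assms(3) G_bound simp del: of_nat_Suc)
    also have "\<dots> = 2 * integral\<^sup>L M (\<lambda>\<omega>. norm (X \<omega>))" by simp
    finally show "(\<Sum>n<N. c (Suc n) / (real (Suc n))^2) \<le> 2 * integral\<^sup>L M (\<lambda>\<omega>. norm (X \<omega>))" .
  qed

  have S1eq: "S1 Xs m = (\<lambda>\<omega>. \<Sum>k\<in>{1..m}. if norm (Xs k \<omega>) \<le> real k then Xs k \<omega> else 0)" for m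
    by (rule ext) (simp add: S1_def)
  have Utreq: "Utr Xs m = (\<lambda>\<omega>. \<Sum>k\<in>{1..m}. if norm (Xs k \<omega>) \<le> real m then Xs k \<omega> else 0)" for m
    by (rule ext) (simp add: Utr_def)
  have intS: "integrable M (S1 Xs m)" for m
    unfolding S1eq by (intro Bochner_Integration.integrable_sum int_tr Xsm) auto
  have intU: "integrable M (Utr Xs m)" for m
    unfolding Utreq by (intro Bochner_Integration.integrable_sum int_tr Xsm) auto
  have ES1: "integral\<^sup>L M (S1 Xs m) = (\<Sum>k\<in>{1..m}. a k)" for m
  proof -
    have "integral\<^sup>L M (S1 Xs m) = (\<Sum>k\<in>{1..m}. integral\<^sup>L M (\<lambda>\<omega>. if norm (Xs k \<omega>) \<le> real k then Xs k \<omega> else 0))"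
      unfolding S1eq by (rule Bochner_Integration.integral_sum) (auto intro!: int_tr Xsm)
    also have "\<dots> = (\<Sum>k\<in>{1..m}. a k)"
      unfolding a_def using transfer[OF _ mtr] by (intro sum.cong) auto
    finally show ?thesis .
  qed

  have bnd1: "norm (integral\<^sup>L M (S1 Xs m) - real m *\<^sub>R a m) \<le> c m" for m
  proof -
    let ?d = "\<lambda>k \<omega>. (if norm (X \<omega>) \<le> real k then X \<omega> else 0) - (if norm (X \<omega>) \<le> real m then X \<omega> else 0)"
    have "integral\<^sup>L M (S1 Xs m) - real m *\<^sub>R a m = (\<Sum>k\<in>{1..m}. a k - a m)"
      using ES1 by (simp add: sum_subtractf sum_constant_scaleR)
    also have "\<dots> = (\<Sum>k\<in>{1..m}. integral\<^sup>L M (?d k))"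
      unfolding a_def by (intro sum.cong refl Bochner_Integration.integral_diff[symmetric] int_tr Xm)
    also have "\<dots> = integral\<^sup>L M (\<lambda>\<omega>. \<Sum>k\<in>{1..m}. ?d k \<omega>)"
      by (rule Bochner_Integration.integral_sum[symmetric]) (auto intro!: int_tr Xm)
    finally have eq: "integral\<^sup>L M (S1 Xs m) - real m *\<^sub>R a m = integral\<^sup>L M (\<lambda>\<omega>. \<Sum>k\<in>{1..m}. ?d k \<omega>)" .
    have "norm (integral\<^sup>L M (\<lambda>\<omega>. \<Sum>k\<in>{1..m}. ?d k \<omega>)) \<le> integral\<^sup>L M (\<lambda>\<omega>. norm (\<Sum>k\<in>{1..m}. ?d k \<omega>))"
      by (rule integral_norm_bound)
    also have "\<dots> \<le> c m" unfolding c_def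
    proof (rule integral_mono)
      show "integrable M (\<lambda>\<omega>. norm (\<Sum>k\<in>{1..m}. ?d k \<omega>))"
        by (intro integrable_norm Bochner_Integration.integrable_sum Bochner_Integration.integrable_diff int_tr Xm)
      show "integrable M (\<lambda>\<omega>. Phi m (norm (X \<omega>)))" by (rule intPhi)
      fix \<omega>
      have "norm (\<Sum>k\<in>{1..m}. ?d k \<omega>) \<le> (\<Sum>k\<in>{1..m}. norm (?d k \<omega>))" by (rule norm_sum)
      also have "\<dots> \<le> (\<Sum>k\<in>{1..m}. phi k m (norm (X \<omega>)))"
        by (intro sum_mono diff_tr) auto
      finally show "norm (\<Sum>k\<in>{1..m}. ?d k \<omega>) \<le> Phi m (norm (X \<omega>))" unfolding Phi_def .
    qed
    finally show ?thesis using eq by simp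
  qed

  have bnd2: "integral\<^sup>L M (\<lambda>\<omega>. norm (S1 Xs m \<omega> - Utr Xs m \<omega>)) \<le> c m" for m
  proof -
    have "integral\<^sup>L M (\<lambda>\<omega>. norm (S1 Xs m \<omega> - Utr Xs m \<omega>))
        \<le> integral\<^sup>L M (\<lambda>\<omega>. \<Sum>k\<in>{1..m}. phi k m (norm (Xs k \<omega>)))"
    proof (rule integral_mono)
      show "integrable M (\<lambda>\<omega>. norm (S1 Xs m \<omega> - Utr Xs m \<omega>))"
        by (intro integrable_norm Bochner_Integration.integrable_diff intS intU)
      show "integrable M (\<lambda>\<omega>. \<Sum>k\<in>{1..m}. phi k m (norm (Xs k \<omega>)))"
        by (intro Bochner_Integration.integrable_sum int_phi Xsm) auto
      fix \<omega>
      have "S1 Xs m \<omega> - Utr Xs m \<omega> = (\<Sum>k\<in>{1..m}. (if norm (Xs k \<omega>) \<le> real k then Xs k \<omega> else 0) - (if norm (Xs k \<omega>) \<le> real m then Xs k \<omega> else 0))"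
        by (simp add: S1_def Utr_def sum_subtractf)
      also have "norm \<dots> \<le> (\<Sum>k\<in>{1..m}. norm ((if norm (Xs k \<omega>) \<le> real k then Xs k \<omega> else 0) - (if norm (Xs k \<omega>) \<le> real m then Xs k \<omega> else 0)))"
        by (rule norm_sum)
      also have "\<dots> \<le> (\<Sum>k\<in>{1..m}. phi k m (norm (Xs k \<omega>)))"
        by (intro sum_mono diff_tr) auto
      finally show "norm (S1 Xs m \<omega> - Utr Xs m \<omega>) \<le> (\<Sum>k\<in>{1..m}. phi k m (norm (Xs k \<omega>)))" .
    qed
    also have "\<dots> = (\<Sum>k\<in>{1..m}. integral\<^sup>L M (\<lambda>\<omega>. phi k m (norm (Xs k \<omega>))))"
      by (rule Bochner_Integration.integral_sum) (auto intro!: int_phi Xsm)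
    also have "\<dots> = (\<Sum>k\<in>{1..m}. integral\<^sup>L M (\<lambda>\<omega>. phi k m (norm (X \<omega>))))"
      using transfer[OF _ mphi] by (intro sum.cong) auto
    also have "\<dots> = c m"
      unfolding c_def Phi_def by (rule Bochner_Integration.integral_sum[symmetric]) (auto intro!: int_phi Xm)
    finally show ?thesis .
  qed

  have half: "integral\<^sup>L M (\<lambda>\<omega>. norm (A \<omega> - integral\<^sup>L M A))
      \<le> integral\<^sup>L M (\<lambda>\<omega>. norm (B \<omega> - integral\<^sup>L M B)) + 2 * integral\<^sup>L M (\<lambda>\<omega>. norm (A \<omega> - B \<omega>))"
    if iA: "integrable M A" and iB: "integrable M B" for A B :: "'a \<Rightarrow> 'b"
  proof -
    let ?D = "integral\<^sup>L M (\<lambda>\<omega>. norm (A \<omega> - B \<omega>))"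
    have iD: "integrable M (\<lambda>\<omega>. norm (A \<omega> - B \<omega>))" by (intro integrable_norm Bochner_Integration.integrable_diff iA iB)
    have "integral\<^sup>L M (\<lambda>\<omega>. norm (A \<omega> - integral\<^sup>L M A))
      \<le> integral\<^sup>L M (\<lambda>\<omega>. norm (B \<omega> - integral\<^sup>L M B) + (norm (A \<omega> - B \<omega>) + norm (integral\<^sup>L M A - integral\<^sup>L M B)))"
    proof (rule integral_mono)
      show "integrable M (\<lambda>\<omega>. norm (A \<omega> - integral\<^sup>L M A))"
        by (intro integrable_norm Bochner_Integration.integrable_diff iA) simp
      show "integrable M (\<lambda>\<omega>. norm (B \<omega> - integral\<^sup>L M B) + (norm (A \<omega> - B \<omega>) + norm (integral\<^sup>L M A - integral\<^sup>L M B)))"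
        by (intro Bochner_Integration.integrable_add integrable_norm Bochner_Integration.integrable_diff iA iB) simp_all
      fix \<omega>
      have e: "A \<omega> - integral\<^sup>L M A = (B \<omega> - integral\<^sup>L M B) + ((A \<omega> - B \<omega>) - (integral\<^sup>L M A - integral\<^sup>L M B))"
        by (simp add: algebra_simps)
      show "norm (A \<omega> - integral\<^sup>L M A) \<le> norm (B \<omega> - integral\<^sup>L M B) + (norm (A \<omega> - B \<omega>) + norm (integral\<^sup>L M A - integral\<^sup>L M B))"
        unfolding e using norm_triangle_ineq[of "B \<omega> - integral\<^sup>L M B" "(A \<omega> - B \<omega>) - (integral\<^sup>L M A - integral\<^sup>L M B)"]
          norm_triangle_ineq4[of "A \<omega> - B \<omega>" "integral\<^sup>L M A - integral\<^sup>L M B"] by linarith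
    qed
    also have "\<dots> = integral\<^sup>L M (\<lambda>\<omega>. norm (B \<omega> - integral\<^sup>L M B)) + (?D + norm (integral\<^sup>L M A - integral\<^sup>L M B))"
      using iD iA iB
      by (subst Bochner_Integration.integral_add, (intro Bochner_Integration.integrable_add integrable_norm Bochner_Integration.integrable_diff iA iB; simp)+,
          subst Bochner_Integration.integral_add, auto simp: P.prob_space)
    also have "norm (integral\<^sup>L M A - integral\<^sup>L M B) \<le> ?D"
    proof -
      have "integral\<^sup>L M A - integral\<^sup>L M B = integral\<^sup>L M (\<lambda>\<omega>. A \<omega> - B \<omega>)"
        by (rule Bochner_Integration.integral_diff[symmetric, OF iA iB])
      thus ?thesis using integral_norm_bound[of M "\<lambda>\<omega>. A \<omega> - B \<omega>"] by simp
    qed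
    finally show ?thesis by linarith
  qed

  have part1: "summable (\<lambda>n. (1 / real (Suc n)) * (norm (integral\<^sup>L M (S1 Xs (Suc n))) / real (Suc n)))
           \<longleftrightarrow> summable (\<lambda>n. norm (integral\<^sup>L M (\<lambda>\<omega>. if norm (X \<omega>) \<le> real (Suc n) then X \<omega> else 0))
                                / real (Suc n))"
  proof (rule summable_iff_close[OF _ _ _ csum])
    fix n
    define m where "m = real (Suc n)"
    have mp: "m > 0" unfolding m_def by simp
    have g: "norm (integral\<^sup>L M (\<lambda>\<omega>. if norm (X \<omega>) \<le> real (Suc n) then X \<omega> else 0)) / real (Suc n)
        = norm (m *\<^sub>R a (Suc n)) / m^2"
      unfolding a_def m_def by (simp add: power2_eq_square)
    have f: "(1 / real (Suc n)) * (norm (integral\<^sup>L M (S1 Xs (Suc n))) / real (Suc n))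
        = norm (integral\<^sup>L M (S1 Xs (Suc n))) / m^2"
      unfolding m_def by (simp add: power2_eq_square)
    have "\<bar>norm (integral\<^sup>L M (S1 Xs (Suc n))) / m^2 - norm (m *\<^sub>R a (Suc n)) / m^2\<bar>
        = \<bar>norm (integral\<^sup>L M (S1 Xs (Suc n))) - norm (m *\<^sub>R a (Suc n))\<bar> / m^2"
      using mp by (simp add: diff_divide_distrib[symmetric])
    also have "\<dots> \<le> norm (integral\<^sup>L M (S1 Xs (Suc n)) - m *\<^sub>R a (Suc n)) / m^2"
      by (intro divide_right_mono norm_triangle_ineq3) simp
    also have "\<dots> \<le> c (Suc n) / m^2"
      using bnd1[of "Suc n"] unfolding m_def by (intro divide_right_mono) auto
    finally show "\<bar>(1 / real (Suc n)) * (norm (integral\<^sup>L M (S1 Xs (Suc n))) / real (Suc n))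
        - norm (integral\<^sup>L M (\<lambda>\<omega>. if norm (X \<omega>) \<le> real (Suc n) then X \<omega> else 0)) / real (Suc n)\<bar>
        \<le> c (Suc n) / (real (Suc n))^2" unfolding f g m_def .
  qed simp_all

  have part2: "summable (\<lambda>n. (1 / real (Suc n)) *
              ((integral\<^sup>L M (\<lambda>\<omega>. norm (S1 Xs (Suc n) \<omega> - integral\<^sup>L M (S1 Xs (Suc n))))) / real (Suc n)))
           \<longleftrightarrow> summable (\<lambda>n. (1 / real (Suc n)) *
              ((integral\<^sup>L M (\<lambda>\<omega>. norm (Utr Xs (Suc n) \<omega> - integral\<^sup>L M (Utr Xs (Suc n))))) / real (Suc n)))"
  proof (rule summable_iff_close[OF _ _ _ summable_mult[OF csum, of 2]])
    fix n
    define m where "m = real (Suc n)"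
    have mp: "m > 0" unfolding m_def by simp
    let ?A = "integral\<^sup>L M (\<lambda>\<omega>. norm (S1 Xs (Suc n) \<omega> - integral\<^sup>L M (S1 Xs (Suc n))))"
    let ?B = "integral\<^sup>L M (\<lambda>\<omega>. norm (Utr Xs (Suc n) \<omega> - integral\<^sup>L M (Utr Xs (Suc n))))"
    have h1: "?A \<le> ?B + 2 * c (Suc n)"
      using half[OF intS intU, of "Suc n" "Suc n"] bnd2[of "Suc n"] by linarith
    have nd: "integral\<^sup>L M (\<lambda>\<omega>. norm (Utr Xs (Suc n) \<omega> - S1 Xs (Suc n) \<omega>))
        = integral\<^sup>L M (\<lambda>\<omega>. norm (S1 Xs (Suc n) \<omega> - Utr Xs (Suc n) \<omega>))"
      by (simp add: norm_minus_commute)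
    have h2: "?B \<le> ?A + 2 * c (Suc n)"
      using half[OF intU intS, of "Suc n" "Suc n"] bnd2[of "Suc n"] nd by linarith
    have "\<bar>(1 / m) * (?A / m) - (1 / m) * (?B / m)\<bar> = \<bar>?A - ?B\<bar> / m^2"
      using mp by (simp add: field_simps power2_eq_square)
    also have "\<dots> \<le> 2 * c (Suc n) / m^2"
      using h1 h2 by (intro divide_right_mono) auto
    finally show "\<bar>(1 / real (Suc n)) * (?A / real (Suc n)) - (1 / real (Suc n)) * (?B / real (Suc n))\<bar>
        \<le> 2 * (c (Suc n) / (real (Suc n))^2)" unfolding m_def by simp
  qed (simp_all add: integral_nonneg_AE)

  show ?thesis using part1 part2 by blast
qed

end
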